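(* For every $l\ge 9$, the graph $C_l\uplus Q(2,2,2)$ has a dispersed $4$-placement.
   Context: $H_1\uplus H_2$ denotes the vertex-disjoint union. $Q(n_1,\dots,n_t)$ ($1\le n_1\le\cdots\le n_t$) is the tree obtained from the star with centre $v$ and $t$ leaves by replacing each leaf with a path $P_{n_i}=v^i_1v^i_2\cdots v^i_{n_i}$, where $v$ is adjacent to $v^i_1$; so $Q(2,2,2)$ is the spider with three legs of length 2 (7 vertices). For a graph $H$ on $m$ vertices, a $k$-placement of $H$ is a $k$-tuple $(\phi_1,\dots,\phi_k)$ of bijections $\phi_i:V(H)\to V(K_m)$ with pairwise disjoint edge sets $\phi_i(E(H))$; it is dispersed if $\phi_i(v)\ne\phi_j(v)$ for every vertex $v$ and all $i\ne j$. *)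

theory Defs
  imports Main
begin

text \<open>A (simple) graph is a pair (V, E): a finite vertex set V and a set E of
  2-element subsets of V (undirected edges).\<close>

type_synonym 'a graph = "'a set \<times> 'a set set"

text \<open>Cycle C_l on vertices 0..l-1 (meaningful for l \<ge> 3).\<close>
definition cycle_graph :: "nat \<Rightarrow> nat graph" where
  "cycle_graph l = ({0..<l}, {{i, Suc i mod l} | i. i < l})"

text \<open>The tree Q(n_1,...,n_t): centre None, and Some (i, j) is the vertex v^{i+1}_{j+1}
  of the path P_{n_{i+1}} (0-based indices).\<close>
definition Q_graph :: "nat list \<Rightarrow> (nat \<times> nat) option graph" where
  "Q_graph ns =
     ({None} \<union> {Some (i, j) | i j. i < length ns \<and> j < ns ! i},
      {{None, Some (i, 0)} | i. i < length ns \<and> 0 < ns ! i}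
      \<union> {{Some (i, j), Some (i, Suc j)} | i j. i < length ns \<and> Suc j < ns ! i})"

definition disj_union :: "'a graph \<Rightarrow> 'b graph \<Rightarrow> ('a + 'b) graph" where
  "disj_union G H =
     (Inl ` fst G \<union> Inr ` fst H, (image Inl) ` snd G \<union> (image Inr) ` snd H)"

text \<open>A k-placement of H (with m = |V(H)| vertices) is a k-tuple (phi_0,...,phi_{k-1}) of
  bijections V(H) \<rightarrow> V(K_m) = {0..<m} whose images of the edge set are pairwise disjoint.\<close>
definition placement :: "'a graph \<Rightarrow> nat \<Rightarrow> (nat \<Rightarrow> 'a \<Rightarrow> nat) \<Rightarrow> bool" where
  "placement H k \<phi> \<longleftrightarrow>
     (\<forall>i<k. bij_betw (\<phi> i) (fst H) {0..<card (fst H)}) \<and>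
     (\<forall>i<k. \<forall>j<k. i \<noteq> j \<longrightarrow> (image (\<phi> i)) ` snd H \<inter> (image (\<phi> j)) ` snd H = {})"

definition dispersed_placement :: "'a graph \<Rightarrow> nat \<Rightarrow> (nat \<Rightarrow> 'a \<Rightarrow> nat) \<Rightarrow> bool" where
  "dispersed_placement H k \<phi> \<longleftrightarrow>
     placement H k \<phi> \<and> (\<forall>i<k. \<forall>j<k. i \<noteq> j \<longrightarrow> (\<forall>v\<in>fst H. \<phi> i v \<noteq> \<phi> j v))"

end

theory Submission imports Defs "HOL-Number_Theory.Cong" begin

definition posf :: "nat \<Rightarrow> nat + (nat \<times> nat) option \<Rightarrow> nat" where
  "posf l v = (case v of Inl k \<Rightarrow> k
     | Inr None \<Rightarrow> l + 2
     | Inr (Some (i, j)) \<Rightarrow> (if i = 0 then (if j = 0 then l + 1 else l) else if i = 1 then (if j = 0 then l + 3 else l + 4)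
        else (if j = 0 then l + 5 else l + 6)))"

definition posinv :: "nat \<Rightarrow> nat \<Rightarrow> nat + (nat \<times> nat) option" where
  "posinv l t = (if t < l then Inl t
     else if t = l then Inr (Some (0,1)) else if t = l+1 then Inr (Some (0,0))
     else if t = l+2 then Inr None else if t = l+3 then Inr (Some (1,0))
     else if t = l+4 then Inr (Some (1,1)) else if t = l+5 then Inr (Some (2,0))
     else Inr (Some (2,1)))"

abbreviation "HH l \<equiv> disj_union (cycle_graph l) (Q_graph [2,2,2])"

lemma nth222: assumes "i < 3" shows "[2::nat,2,2] ! i = 2"
proof -
  have "i = 0 \<or> i = 1 \<or> i = 2" using assms by auto
  then show ?thesis by (elim disjE) simp_all
qed

lemma Qset: "{Some (i, j) | i j. i < length [2::nat,2,2] \<and> j < [2::nat,2,2] ! i} = Some ` ({0,1,2} \<times> {0,1})"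
proof (rule set_eqI)
  fix x
  show "x \<in> {Some (i, j) | i j. i < length [2::nat,2,2] \<and> j < [2::nat,2,2] ! i} \<longleftrightarrow> x \<in> Some ` ({0,1,2} \<times> {0,1})"
  proof
    assume "x \<in> {Some (i, j) | i j. i < length [2::nat,2,2] \<and> j < [2::nat,2,2] ! i}"
    then obtain i j where ij: "x = Some (i,j)" "i < 3" "j < [2::nat,2,2] ! i" by auto
    then have "j < 2" using nth222 by simp
    then have "j = 0 \<or> j = 1" by auto
    moreover have "i = 0 \<or> i = 1 \<or> i = 2" using ij by auto
    ultimately have "(i,j) \<in> {0,1,2} \<times> {0,1}" by blast
    then show "x \<in> Some ` ({0,1,2} \<times> {0,1})" using ij by blast
  next
    assume "x \<in> Some ` ({0,1,2} \<times> {0,1})"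
    then obtain i j where ij: "x = Some (i,j)" "i = 0 \<or> i = 1 \<or> i = 2" "j = 0 \<or> j = 1" by blast
    then have "i < 3" "j < 2" by auto
    then have "i < length [2::nat,2,2] \<and> j < [2::nat,2,2] ! i" using nth222 by simp
    then show "x \<in> {Some (i, j) | i j. i < length [2::nat,2,2] \<and> j < [2::nat,2,2] ! i}" using ij(1) by blast
  qed
qed

lemma V_eq: "fst (HH l) = Inl ` {0..<l} \<union> Inr ` ({None} \<union> Some ` ({0,1,2} \<times> {0,1}))"
  using Qset by (simp add: disj_union_def cycle_graph_def Q_graph_def)

lemma V_cases:
  assumes "a \<in> fst (HH l)"
  obtains (inl) k where "k < l" "a = Inl k" | (none) "a = Inr None"
      | (sm) i j where "i = 0 \<or> i = 1 \<or> i = 2" "j = 0 \<or> j = 1" "a = Inr (Some (i, j))"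
proof -
  from assms have "a \<in> Inl ` {0..<l} \<or> a \<in> Inr ` ({None} \<union> Some ` ({0,1,2} \<times> {0,1}))"
    unfolding V_eq Un_iff .
  then show ?thesis
  proof
    assume "a \<in> Inl ` {0..<l}"
    then obtain k where "k \<in> {0..<l}" "a = Inl k" by (rule imageE)
    then show ?thesis using inl by simp
  next
    assume "a \<in> Inr ` ({None} \<union> Some ` ({0,1,2} \<times> {0,1}))"
    then obtain y where y: "y \<in> {None} \<union> Some ` ({0,1,2} \<times> {0,1})" "a = Inr y" by (rule imageE)
    from y(1) have "y = None \<or> y \<in> Some ` ({0,1,2} \<times> {0,1})" by (simp only: Un_iff singleton_iff)
    then show ?thesis
    proof
      assume "y = None" then show ?thesis using none y(2) by simp
    next
      assume "y \<in> Some ` ({0,1,2} \<times> {0,1})"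
      then obtain p where p: "p \<in> {0,1,2} \<times> {0,1}" "y = Some p" by (rule imageE)
      obtain i j where "p = (i,j)" by (cases p)
      with p have "i \<in> {0,1,2}" "j \<in> {0,1}" by auto
      then have "i = 0 \<or> i = 1 \<or> i = 2" "j = 0 \<or> j = 1" by auto
      then show ?thesis using sm y(2) p(2) \<open>p = (i,j)\<close> by simp
    qed
  qed
qed

lemma posf_simps: "posf l (Inl k) = k" "posf l (Inr None) = l + 2"
  "posf l (Inr (Some (0,0))) = l + 1" "posf l (Inr (Some (0,1))) = l"
  "posf l (Inr (Some (1,0))) = l + 3" "posf l (Inr (Some (1,1))) = l + 4"
  "posf l (Inr (Some (2,0))) = l + 5" "posf l (Inr (Some (2,1))) = l + 6"
  by (simp_all add: posf_def)

lemma posf_lt: assumes "a \<in> fst (HH l)" shows "posf l a < l + 7"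
  using assms
proof (cases rule: V_cases)
  case (sm i j) then show ?thesis by (elim disjE; simp add: posf_def)
qed (simp_all add: posf_def)

lemma posinv_mem: assumes "t < l + 7" shows "posinv l t \<in> fst (HH l)"
proof -
  have v: "Inr (Some (i,j)) \<in> fst (HH l)" if "i < 3" "j < 2" for i j
    using that unfolding V_eq by auto
  have n: "Inr None \<in> fst (HH l)" unfolding V_eq by auto
  show ?thesis
  proof (cases "t < l")
    case True then show ?thesis unfolding V_eq by (simp add: posinv_def)
  next
    case False
    then have "t = l \<or> t = l+1 \<or> t = l+2 \<or> t = l+3 \<or> t = l+4 \<or> t = l+5 \<or> t = l+6" using assms by auto
    then show ?thesis
      by (elim disjE) (simp_all add: posinv_def v n)
  qed
qed

lemma pos_bij: "bij_betw (posf l) (fst (HH l)) {0..<l+7}"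
proof (rule bij_betw_byWitness[where f'="posinv l"])
  show "\<forall>a\<in>fst (HH l). posinv l (posf l a) = a"
  proof
    fix a assume "a \<in> fst (HH l)"
    then consider (inl) k where "k < l" "a = Inl k" | (none) "a = Inr None"
      | (sm) i j where "i = 0 \<or> i = 1 \<or> i = 2" "j = 0 \<or> j = 1" "a = Inr (Some (i, j))"
      unfolding V_eq by auto
    then show "posinv l (posf l a) = a"
    proof cases
      case inl then show ?thesis by (simp add: posf_def posinv_def)
    next
      case none then show ?thesis by (simp add: posf_def posinv_def)
    next
      case sm then show ?thesis by (elim disjE; simp add: posf_def posinv_def)
    qed
  qed
  show "\<forall>a\<in>{0..<l+7}. posf l (posinv l a) = a"
  proof
    fix t assume "t \<in> {0..<l+7}"
    then have "t < l \<or> t = l \<or> t = l+1 \<or> t = l+2 \<or> t = l+3 \<or> t = l+4 \<or> t = l+5 \<or> t = l+6" by auto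
    then show "posf l (posinv l t) = t" by (elim disjE) (simp_all add: posf_def posinv_def)
  qed
  show "posf l ` fst (HH l) \<subseteq> {0..<l+7}"
    using posf_lt by auto
  show "posinv l ` {0..<l+7} \<subseteq> fst (HH l)"
  proof
    fix x assume "x \<in> posinv l ` {0..<l+7}"
    then obtain t where "t < l+7" "x = posinv l t" by auto
    then have "posinv l t \<in> fst (HH l)" using posinv_mem by simp
    then show "x \<in> fst (HH l)" using \<open>x = _\<close> by simp
  qed
qed

lemma card_V: "card (fst (HH l)) = l + 7"
  using bij_betw_same_card[OF pos_bij] by simp

lemma shift_bij:
  assumes "0 < n" shows "bij_betw (\<lambda>x. (x + c) mod (n::nat)) {0..<n} {0..<n}"
proof -
  have inj: "inj_on (\<lambda>x. (x + c) mod n) {0..<n}"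
  proof (rule inj_onI)
    fix x y assume "x \<in> {0..<n}" "y \<in> {0..<n}" "(x + c) mod n = (y + c) mod n"
    then have "[x + c = y + c] (mod n)" by (simp add: cong_def)
    then have "[x = y] (mod n)" by (simp add: cong_add_rcancel_nat)
    with \<open>x \<in> _\<close> \<open>y \<in> _\<close> show "x = y" by (simp add: cong_def)
  qed
  have sub: "(\<lambda>x. (x + c) mod n) ` {0..<n} \<subseteq> {0..<n}" using assms by auto
  have "(\<lambda>x. (x + c) mod n) ` {0..<n} = {0..<n}"
    by (rule endo_inj_surj[OF _ sub inj]) simp
  with inj show ?thesis by (simp add: bij_betw_def)
qed

definition EPL :: "nat \<Rightarrow> (nat \<times> nat) list" where
  "EPL l = map (\<lambda>k. (k, Suc k)) [0..<l-1] @
     [(0, l-1), (l+1,l), (l+2,l+1), (l+2,l+3), (l+3,l+4), (l+2,l+5), (l+5,l+6)]"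

lemma EPL_tail: "{(0, l-1), (l+1,l), (l+2,l+1), (l+2,l+3), (l+3,l+4), (l+2,l+5), (l+5,l+6)} \<subseteq> set (EPL l)"
  unfolding EPL_def by simp

lemma EPL_mem: "(l+1,l) \<in> set (EPL l)" "(l+2,l+1) \<in> set (EPL l)" "(l+2,l+3) \<in> set (EPL l)"
  "(l+3,l+4) \<in> set (EPL l)" "(l+2,l+5) \<in> set (EPL l)" "(l+5,l+6) \<in> set (EPL l)"
  by (simp_all add: EPL_def)

lemma edge_char:
  assumes "l \<ge> 3" "e \<in> snd (HH l)"
  shows "\<exists>x y. e = {x,y} \<and> (posf l x, posf l y) \<in> set (EPL l)"
proof -
  have "(\<exists>i<l. e = {Inl i, Inl (Suc i mod l)}) \<or> (\<exists>i<3. e = {Inr None, Inr (Some (i, 0))})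
     \<or> (\<exists>i<3. \<exists>j. Suc j < 2 \<and> e = {Inr (Some (i, j)), Inr (Some (i, Suc j))})"
    using assms(2) by (auto simp: disj_union_def cycle_graph_def Q_graph_def numeral_3_eq_3 less_Suc_eq nth_Cons')
  then consider (c) i where "i < l" "e = {Inl i, Inl (Suc i mod l)}"
    | (q1) i where "i < 3" "e = {Inr None, Inr (Some (i, 0))}"
    | (q2) i j where "i < 3" "Suc j < 2" "e = {Inr (Some (i, j)), Inr (Some (i, Suc j))}"
    by blast
  then show ?thesis
  proof cases
    case c
    show ?thesis
    proof (cases "Suc i < l")
      case True
      then have "e = {Inl i, Inl (Suc i)}" using c by simp
      moreover have "(i, Suc i) \<in> set (EPL l)" using True by (auto simp: EPL_def)
      ultimately show ?thesis by (intro exI[of _ "Inl i"] exI[of _ "Inl (Suc i)"]) (simp add: posf_def)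
    next
      case False
      then have "i = l - 1" "Suc i = l" using c by auto
      then have "e = {Inl 0, Inl (l-1)}" using c by auto
      moreover have "(0, l-1) \<in> set (EPL l)" by (auto simp: EPL_def)
      ultimately show ?thesis by (intro exI[of _ "Inl 0"] exI[of _ "Inl (l-1)"]) (simp add: posf_def)
    qed
  next
    case q1
    from q1(1) have "i = 0 \<or> i = 1 \<or> i = 2" by auto
    then have "(posf l (Inr None), posf l (Inr (Some (i, 0)))) \<in> set (EPL l)"
      by (elim disjE) (simp_all add: posf_def EPL_mem[simplified])
    then show ?thesis using q1(2) by (intro exI[of _ "Inr None"] exI[of _ "Inr (Some (i,0))"] conjI) simp_all
  next
    case q2
    then have "j = 0" by auto
    from q2(1) have "i = 0 \<or> i = 1 \<or> i = 2" by auto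
    then have "(posf l (Inr (Some (i, j))), posf l (Inr (Some (i, Suc j)))) \<in> set (EPL l)"
      using \<open>j = 0\<close> by (elim disjE) (simp_all add: posf_def EPL_mem[simplified])
    then show ?thesis using q2(3) by (intro exI[of _ "Inr (Some (i,j))"] exI[of _ "Inr (Some (i,Suc j))"] conjI) simp_all
  qed
qed

lemma reduction:
  fixes g s :: "nat \<Rightarrow> nat"
  assumes l: "l \<ge> 3" and gb: "bij_betw g {0..<l+7} {0..<l+7}"
    and sl: "\<And>i. i < 4 \<Longrightarrow> s i < l+7"
    and sd: "\<And>i j. i < 4 \<Longrightarrow> j < 4 \<Longrightarrow> i \<noteq> j \<Longrightarrow> s i \<noteq> s j"
    and ec: "\<And>i j p q p' q'. i < 4 \<Longrightarrow> j < 4 \<Longrightarrow> i \<noteq> j \<Longrightarrow> (p,q) \<in> set (EPL l) \<Longrightarrow> (p',q') \<in> set (EPL l)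
       \<Longrightarrow> {(g p + s i) mod (l+7), (g q + s i) mod (l+7)} \<noteq> {(g p' + s j) mod (l+7), (g q' + s j) mod (l+7)}"
  shows "\<exists>\<phi>. dispersed_placement (HH l) 4 \<phi>"
proof -
  define \<phi> where "\<phi> = (\<lambda>i v. (g (posf l v) + s i) mod (l+7))"
  have bij: "bij_betw (\<phi> i) (fst (HH l)) {0..<card (fst (HH l))}" for i
  proof -
    have "bij_betw (((\<lambda>x. (x + s i) mod (l+7)) \<circ> g) \<circ> posf l) (fst (HH l)) {0..<l+7}"
      by (intro bij_betw_trans[OF pos_bij] bij_betw_trans[OF gb] shift_bij) simp
    then show ?thesis by (simp add: \<phi>_def card_V comp_def)
  qed
  have disj: "image (\<phi> i) ` snd (HH l) \<inter> image (\<phi> j) ` snd (HH l) = {}"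
    if ij: "i < 4" "j < 4" "i \<noteq> j" for i j
  proof (rule ccontr)
    assume "image (\<phi> i) ` snd (HH l) \<inter> image (\<phi> j) ` snd (HH l) \<noteq> {}"
    then obtain e e' where e: "e \<in> snd (HH l)" "e' \<in> snd (HH l)" "\<phi> i ` e = \<phi> j ` e'" by blast
    from edge_char[OF l e(1)] obtain x y where xy: "e = {x,y}" "(posf l x, posf l y) \<in> set (EPL l)" by blast
    from edge_char[OF l e(2)] obtain x' y' where xy': "e' = {x',y'}" "(posf l x', posf l y') \<in> set (EPL l)" by blast
    have "{(g (posf l x) + s i) mod (l+7), (g (posf l y) + s i) mod (l+7)} =
          {(g (posf l x') + s j) mod (l+7), (g (posf l y') + s j) mod (l+7)}"
      using e(3) xy(1) xy'(1) by (simp add: \<phi>_def)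
    with ec[OF ij xy(2) xy'(2)] show False by blast
  qed
  have disp: "\<phi> i v \<noteq> \<phi> j v" if ij: "i < 4" "j < 4" "i \<noteq> j" and v: "v \<in> fst (HH l)" for i j v
  proof
    assume "\<phi> i v = \<phi> j v"
    then have "[g (posf l v) + s i = g (posf l v) + s j] (mod (l+7))" by (simp add: \<phi>_def cong_def)
    then have "[s i = s j] (mod (l+7))" by (simp add: cong_add_lcancel_nat)
    then have "s i = s j" using sl[OF ij(1)] sl[OF ij(2)] by (simp add: cong_def)
    with sd[OF ij] show False ..
  qed
  have "dispersed_placement (HH l) 4 \<phi>"
    unfolding dispersed_placement_def placement_def
  proof (intro conjI allI impI ballI)
    fix i assume "i < (4::nat)" show "bij_betw (\<phi> i) (fst (HH l)) {0..<card (fst (HH l))}" by (rule bij)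
  next
    fix i j :: nat assume "i < 4" "j < 4" "i \<noteq> j"
    then show "image (\<phi> i) ` snd (HH l) \<inter> image (\<phi> j) ` snd (HH l) = {}" by (rule disj)
  next
    fix i j :: nat and v assume "i < 4" "j < 4" "i \<noteq> j" "v \<in> fst (HH l)"
    then show "\<phi> i v \<noteq> \<phi> j v" by (rule disp)
  qed
  then show ?thesis by blast
qed

definition z :: "nat \<Rightarrow> nat \<Rightarrow> nat" where
  "z n t = (if t = 0 then 0 else if even t then n - t div 2 else t div 2 + 1)"

lemma z_lt: "t < n \<Longrightarrow> z n t < n"
  unfolding z_def by presburger

lemma z_alt: "z n t = (if t div 2 = 0 \<and> t mod 2 = 0 then 0 else if t mod 2 = 0 then n - t div 2 else t div 2 + 1)"
  unfolding z_def by (auto simp: even_iff_mod_2_eq_zero)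

lemma z_inj1: assumes "t1 < n" "t2 < n" "z n t1 = z n t2" shows "t1 = t2"
proof -
  define a1 where "a1 = t1 div 2"
  define b1 where "b1 = t1 mod 2"
  define a2 where "a2 = t2 div 2"
  define b2 where "b2 = t2 mod 2"
  have e: "t1 = 2*a1 + b1" "t2 = 2*a2 + b2" "b1 < 2" "b2 < 2" unfolding a1_def b1_def a2_def b2_def by auto
  have "(if a1 = 0 \<and> b1 = 0 then 0 else if b1 = 0 then n - a1 else a1 + 1) =
        (if a2 = 0 \<and> b2 = 0 then 0 else if b2 = 0 then n - a2 else a2 + 1)"
    using assms(3) unfolding z_alt a1_def b1_def a2_def b2_def .
  then show ?thesis using e assms(1,2) by (auto split: if_splits)
qed

lemma z_inj: "inj_on (z n) {0..<n}"
  unfolding inj_on_def using z_inj1 by auto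

lemma z_bij: "bij_betw (z n) {0..<n} {0..<n}"
proof -
  have sub: "z n ` {0..<n} \<subseteq> {0..<n}" using z_lt by auto
  have "z n ` {0..<n} = {0..<n}" by (rule endo_inj_surj[OF _ sub z_inj]) simp
  with z_inj show ?thesis by (simp add: bij_betw_def)
qed

lemma z_even: "z n (2*a) = (if a = 0 then 0 else n - a)"
  unfolding z_def by simp

lemma z_odd: "z n (2*a+1) = a + 1"
  unfolding z_def by simp

lemma z_sum: assumes "Suc k < n" shows "(z n k + z n (Suc k)) mod n = (if even k then 1 else 0)"
proof (cases "even k")
  case True
  then obtain a where a: "k = 2*a" by (rule evenE)
  have "Suc k = 2*a+1" using a by simp
  then have z1: "z n (Suc k) = a + 1" by (simp only: z_odd)
  have z0: "z n k = (if a = 0 then 0 else n - a)" using a by (simp only: z_even)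
  have "a < n" using a assms by simp
  then have "z n k + z n (Suc k) = (if a = 0 then 1 else n + 1)"
    using z0 z1 by simp
  then show ?thesis using True assms by (auto simp: mod_Suc)
next
  case False
  then obtain a where a: "k = 2*a+1" by (rule oddE)
  have "Suc k = 2*(a+1)" using a by simp
  then have z1: "z n (Suc k) = n - (a + 1)" by (simp only: z_even, (simp)?)
  have z0: "z n k = a + 1" using a by (simp only: z_odd)
  have "a + 1 < n" using a assms by simp
  then have "z n k + z n (Suc k) = n"
    using z0 z1 by simp
  then show ?thesis using False by auto
qed

lemma sep:
  fixes n C X k k' i j :: nat
  assumes "k \<in> {0,1,C,X}" "k' \<in> {0,1,C,X}" "15 \<le> C" "C + 14 \<le> n" "X = 2 \<or> X = n - 1"
    "i < 4" "j < 4" "i \<noteq> j"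
  shows "(k + 4*i) mod n \<noteq> (k' + 4*j) mod n"
proof -
  have r: "(x + 4*m) mod n = (if x + 4*m < n then x + 4*m else x + 4*m - n)"
    if "x \<in> {0,1,C,X}" "m < 4" for x m
  proof -
    have "x + 4*m < 2*n" using that assms by auto
    then show ?thesis by (simp add: le_mod_geq)
  qed
  show ?thesis using assms unfolding r[OF assms(1,6)] r[OF assms(2,7)] by auto
qed


definition Cv :: "nat \<Rightarrow> nat" where
  "Cv l = (if even l then l div 2 else (l + 7) - (l - 1) div 2)"
definition Xv :: "nat \<Rightarrow> nat" where
  "Xv l = (if even l then 2 else (l + 7) - 1)"

lemma kappa:
  assumes l: "l \<ge> 30" and pq: "(p,q) \<in> set (EPL l)"
  shows "(z (l+7) p + z (l+7) q) mod (l+7) \<in> {0, 1, Cv l, Xv l}"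
proof -
  let ?n = "l + 7"
  have path: "(z ?n k + z ?n (Suc k)) mod ?n \<in> {0, 1, Cv l, Xv l}" if "Suc k < ?n" for k
    using z_sum[OF that] by auto
  have pathr: "(z ?n (Suc k) + z ?n k) mod ?n \<in> {0, 1, Cv l, Xv l}" if "Suc k < ?n" for k
    using path[OF that] by (simp add: add.commute)
  have path': "(z ?n k + z ?n (k+1)) mod ?n \<in> {0, 1, Cv l, Xv l}" if "k + 1 < ?n" for k
    using path[of k] that by simp
  have pathr': "(z ?n (k+1) + z ?n k) mod ?n \<in> {0, 1, Cv l, Xv l}" if "k + 1 < ?n" for k
    using pathr[of k] that by simp
  from pq consider (p) k where "k < l - 1" "p = k" "q = Suc k"
    | (c) "p = 0" "q = l - 1"
    | (t1) "p = l+1" "q = l" | (t2) "p = l+2" "q = l+1" | (t3) "p = l+2" "q = l+3"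
    | (t4) "p = l+3" "q = l+4" | (t5) "p = l+2" "q = l+5" | (t6) "p = l+5" "q = l+6"
    unfolding EPL_def by auto
  then show ?thesis
  proof cases
    case p then show ?thesis using path[of k] by simp
  next
    case c
    have z0: "z ?n 0 = 0" by (simp add: z_def)
    show ?thesis
    proof (cases "even l")
      case True
      then obtain a where a: "l = 2*a" by (rule evenE)
      then have "l - 1 = 2*(a - 1) + 1" using l by simp
      then have "z ?n (l - 1) = a" using l a by (simp only: z_odd, (simp)?)
      then have "(z ?n p + z ?n q) mod ?n = Cv l" using c z0 a True l by (simp add: Cv_def)
      then show ?thesis by simp
    next
      case False
      then obtain a where a: "l = 2*a + 1" by (rule oddE)
      then have "l - 1 = 2*a" by simp
      then have "z ?n (l - 1) = ?n - a" using l a by (simp only: z_even, (simp)?)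
      then have "(z ?n p + z ?n q) mod ?n = Cv l" using c z0 a False l by (simp add: Cv_def)
      then show ?thesis by simp
    qed
  next
    case t1 then show ?thesis by (simp only:) (rule pathr'[of l], simp)
  next
    case t2
    have e: "l+1+1 = l+2" by simp
    from t2 show ?thesis by (simp only:) (rule pathr'[of "l+1", unfolded e], simp)
  next
    case t3
    have e: "l+2+1 = l+3" by simp
    from t3 show ?thesis by (simp only:) (rule path'[of "l+2", unfolded e], simp)
  next
    case t4
    have e: "l+3+1 = l+4" by simp
    from t4 show ?thesis by (simp only:) (rule path'[of "l+3", unfolded e], simp)
  next
    case t6
    have e: "l+5+1 = l+6" by simp
    from t6 show ?thesis by (simp only:) (rule path'[of "l+5", unfolded e], simp)
  next
    case t5
    show ?thesis
    proof (cases "even l")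
      case True
      then obtain a where a: "l = 2*a" by (rule evenE)
      then have e1: "l + 2 = 2*(a+1)" "l + 5 = 2*(a+2)+1" by simp_all
      have "z ?n (l+2) = ?n - (a+1)" by (simp only: e1 z_even, (simp)?)
      moreover have "z ?n (l+5) = a + 3" by (simp only: e1 z_odd, (simp)?)
      ultimately have "z ?n p + z ?n q = ?n + 2" using t5 a by simp
      moreover have "(?n + 2) mod ?n = 2" by (simp only: mod_add_self1) simp
      ultimately have "(z ?n p + z ?n q) mod ?n = Xv l" using True by (simp only: Xv_def if_True)
      then show ?thesis by simp
    next
      case False
      then obtain a where a: "l = 2*a + 1" by (rule oddE)
      then have e1: "l + 2 = 2*(a+1)+1" "l + 5 = 2*(a+3)" by simp_all
      have "z ?n (l+2) = a + 2" by (simp only: e1 z_odd, (simp)?)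
      moreover have "z ?n (l+5) = ?n - (a+3)" by (simp only: e1 z_even, (simp)?)
      ultimately have "z ?n p + z ?n q = ?n - 1" using t5 a by simp
      then have "(z ?n p + z ?n q) mod ?n = Xv l" using False by (simp add: Xv_def)
      then show ?thesis by simp
    qed
  qed
qed

lemma pair_sum: "{a, b} = {c, d} \<Longrightarrow> a + b = c + (d::nat)"
  by (auto simp: doubleton_eq_iff)

lemma modsum: "((x + 2*i) mod n + (y + 2*i) mod n) mod n = ((x + y) mod n + 4*i) mod (n::nat)"
proof -
  have "((x + 2*i) mod n + (y + 2*i) mod n) mod n = ((x + 2*i) + (y + 2*i)) mod n" by (rule mod_add_eq)
  also have "(x + 2*i) + (y + 2*i) = (x + y) + 4*i" by simp
  also have "((x + y) + 4*i) mod n = ((x + y) mod n + 4*i) mod n" by (rule mod_add_left_eq[symmetric])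
  finally show ?thesis .
qed

lemma large: assumes l: "l \<ge> 30" shows "\<exists>\<phi>. dispersed_placement (HH l) 4 \<phi>"
proof (rule reduction[where g = "z (l+7)" and s = "\<lambda>i. 2*i"])
  show "3 \<le> l" using l by simp
  show "bij_betw (z (l+7)) {0..<l+7} {0..<l+7}" by (rule z_bij)
  show "\<And>i::nat. i < 4 \<Longrightarrow> 2*i < l+7" using l by simp
  show "\<And>i j::nat. i < 4 \<Longrightarrow> j < 4 \<Longrightarrow> i \<noteq> j \<Longrightarrow> 2*i \<noteq> 2*j" by simp
  have C1: "15 \<le> Cv l" and C2: "Cv l + 14 \<le> l + 7" using l by (auto simp: Cv_def)
  have X: "Xv l = 2 \<or> Xv l = l + 7 - 1" by (simp add: Xv_def)
  fix i j p q p' q' :: nat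
  assume ij: "i < 4" "j < 4" "i \<noteq> j" and pq: "(p,q) \<in> set (EPL l)" and pq': "(p',q') \<in> set (EPL l)"
  show "{(z (l+7) p + 2*i) mod (l+7), (z (l+7) q + 2*i) mod (l+7)} \<noteq>
        {(z (l+7) p' + 2*j) mod (l+7), (z (l+7) q' + 2*j) mod (l+7)}"
  proof
    assume "{(z (l+7) p + 2*i) mod (l+7), (z (l+7) q + 2*i) mod (l+7)} =
        {(z (l+7) p' + 2*j) mod (l+7), (z (l+7) q' + 2*j) mod (l+7)}"
    then have "((z (l+7) p + 2*i) mod (l+7) + (z (l+7) q + 2*i) mod (l+7)) mod (l+7) =
        ((z (l+7) p' + 2*j) mod (l+7) + (z (l+7) q' + 2*j) mod (l+7)) mod (l+7)"
      by (metis pair_sum)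
    then have "((z (l+7) p + z (l+7) q) mod (l+7) + 4*i) mod (l+7) = ((z (l+7) p' + z (l+7) q') mod (l+7) + 4*j) mod (l+7)"
      by (simp only: modsum)
    with sep[OF kappa[OF l pq] kappa[OF l pq'] C1 C2 X ij] show False by simp
  qed
qed

definition sumcheck :: "nat \<Rightarrow> (nat \<Rightarrow> nat) \<Rightarrow> nat list \<Rightarrow> nat list \<Rightarrow> bool" where
  "sumcheck l g ss K = (list_all (\<lambda>(p,q). (g p + g q) mod (l+7) \<in> set K) (EPL l) \<and>
     list_all (\<lambda>(i,j). i = j \<or> list_all (\<lambda>k. list_all (\<lambda>k'. (k + 2*(ss!i)) mod (l+7) \<noteq> (k' + 2*(ss!j)) mod (l+7)) K) K)
       (List.product [0..<4] [0..<4]) \<and>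
     list_all (\<lambda>x. x < l+7) ss \<and> distinct ss \<and> length ss = 4)"

lemma modsum2: "((x + c) mod n + (y + c) mod n) mod n = ((x + y) mod n + 2*c) mod (n::nat)"
proof -
  have "((x + c) mod n + (y + c) mod n) mod n = ((x + c) + (y + c)) mod n" by (rule mod_add_eq)
  also have "(x + c) + (y + c) = (x + y) + 2*c" by simp
  also have "((x + y) + 2*c) mod n = ((x + y) mod n + 2*c) mod n" by (rule mod_add_left_eq[symmetric])
  finally show ?thesis .
qed

lemma sumcrit:
  assumes l: "l \<ge> 3" and gb: "bij_betw g {0..<l+7} {0..<l+7}" and sc: "sumcheck l g ss K"
  shows "\<exists>\<phi>. dispersed_placement (HH l) 4 \<phi>"
proof (rule reduction[where g = g and s = "nth ss"])
  show "3 \<le> l" by (rule l)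
  show "bij_betw g {0..<l+7} {0..<l+7}" by (rule gb)
  have K: "\<And>p q. (p,q) \<in> set (EPL l) \<Longrightarrow> (g p + g q) mod (l+7) \<in> set K"
    and S: "\<And>i j k k'. i < 4 \<Longrightarrow> j < 4 \<Longrightarrow> i \<noteq> j \<Longrightarrow> k \<in> set K \<Longrightarrow> k' \<in> set K \<Longrightarrow>
        (k + 2*(ss!i)) mod (l+7) \<noteq> (k' + 2*(ss!j)) mod (l+7)"
    and lt: "\<And>x. x \<in> set ss \<Longrightarrow> x < l+7" and d: "distinct ss" and len: "length ss = 4"
    using sc unfolding sumcheck_def list_all_iff by fastforce+
  show "\<And>i. i < 4 \<Longrightarrow> ss ! i < l+7" using lt len by simp
  show "\<And>i j. i < 4 \<Longrightarrow> j < 4 \<Longrightarrow> i \<noteq> j \<Longrightarrow> ss ! i \<noteq> ss ! j"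
    using d len by (simp add: nth_eq_iff_index_eq)
  fix i j p q p' q' :: nat
  assume ij: "i < 4" "j < 4" "i \<noteq> j" and pq: "(p,q) \<in> set (EPL l)" and pq': "(p',q') \<in> set (EPL l)"
  show "{(g p + ss!i) mod (l+7), (g q + ss!i) mod (l+7)} \<noteq>
        {(g p' + ss!j) mod (l+7), (g q' + ss!j) mod (l+7)}"
  proof
    assume "{(g p + ss!i) mod (l+7), (g q + ss!i) mod (l+7)} =
        {(g p' + ss!j) mod (l+7), (g q' + ss!j) mod (l+7)}"
    then have "((g p + ss!i) mod (l+7) + (g q + ss!i) mod (l+7)) mod (l+7) =
        ((g p' + ss!j) mod (l+7) + (g q' + ss!j) mod (l+7)) mod (l+7)"
      by (metis pair_sum)
    then have "((g p + g q) mod (l+7) + 2*(ss!i)) mod (l+7) = ((g p' + g q') mod (l+7) + 2*(ss!j)) mod (l+7)"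
      by (simp only: modsum2)
    with S[OF ij K[OF pq] K[OF pq']] show False by simp
  qed
qed

lemma tbl_bij: "sort tbl = [0..<length tbl] \<Longrightarrow> bij_betw (nth tbl) {0..<length tbl} {0..<length tbl}"
proof -
  assume s: "sort tbl = [0..<length tbl]"
  have d: "distinct tbl" using s by (metis distinct_sort distinct_upt)
  have st: "set tbl = {0..<length tbl}" using s by (metis set_sort set_upt)
  have "inj_on (nth tbl) {0..<length tbl}" using d by (simp add: inj_on_nth)
  moreover have "nth tbl ` {0..<length tbl} = set tbl" by (auto simp: in_set_conv_nth)
  ultimately show ?thesis using st by (simp add: bij_betw_def)
qed

lemma tbl_bij': "sort tbl = [0..<n] \<Longrightarrow> bij_betw (nth tbl) {0..<n} {0..<n}"
  by (metis length_sort length_upt minus_nat.diff_0 tbl_bij)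

lemma case9: "\<exists>\<phi>. dispersed_placement (HH 9) 4 \<phi>"
proof (rule sumcrit[where g = "nth [0::nat, 1, 2, 14, 5, 12, 4, 15, 3, 13, 6, 10, 7, 9, 8, 11]" and ss = "[0,2,4,6]" and K = "[0,1,2,3]"])
  show "bij_betw (nth [0::nat, 1, 2, 14, 5, 12, 4, 15, 3, 13, 6, 10, 7, 9, 8, 11]) {0..<9+7} {0..<9+7}"
  proof -
    have t: "sort [0::nat, 1, 2, 14, 5, 12, 4, 15, 3, 13, 6, 10, 7, 9, 8, 11] = [0..<16]" by code_simp
    show ?thesis using tbl_bij'[OF t] by simp
  qed
  show "sumcheck 9 (nth [0::nat, 1, 2, 14, 5, 12, 4, 15, 3, 13, 6, 10, 7, 9, 8, 11]) [0,2,4,6] [0,1,2,3]" by code_simp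
qed simp

lemma case10: "\<exists>\<phi>. dispersed_placement (HH 10) 4 \<phi>"
proof (rule sumcrit[where g = "nth [0::nat, 1, 16, 2, 15, 4, 13, 5, 14, 3, 8, 10, 7, 11, 9, 12, 6]" and ss = "[0,2,4,6]" and K = "[0,1,2,3]"])
  show "bij_betw (nth [0::nat, 1, 16, 2, 15, 4, 13, 5, 14, 3, 8, 10, 7, 11, 9, 12, 6]) {0..<10+7} {0..<10+7}"
  proof -
    have t: "sort [0::nat, 1, 16, 2, 15, 4, 13, 5, 14, 3, 8, 10, 7, 11, 9, 12, 6] = [0..<17]" by code_simp
    show ?thesis using tbl_bij'[OF t] by simp
  qed
  show "sumcheck 10 (nth [0::nat, 1, 16, 2, 15, 4, 13, 5, 14, 3, 8, 10, 7, 11, 9, 12, 6]) [0,2,4,6] [0,1,2,3]" by code_simp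
qed simp

lemma case11: "\<exists>\<phi>. dispersed_placement (HH 11) 4 \<phi>"
proof (rule sumcrit[where g = "nth [0::nat, 1, 2, 16, 5, 13, 6, 15, 4, 17, 3, 14, 7, 11, 8, 10, 9, 12]" and ss = "[0,2,4,6]" and K = "[0,1,2,3]"])
  show "bij_betw (nth [0::nat, 1, 2, 16, 5, 13, 6, 15, 4, 17, 3, 14, 7, 11, 8, 10, 9, 12]) {0..<11+7} {0..<11+7}"
  proof -
    have t: "sort [0::nat, 1, 2, 16, 5, 13, 6, 15, 4, 17, 3, 14, 7, 11, 8, 10, 9, 12] = [0..<18]" by code_simp
    show ?thesis using tbl_bij'[OF t] by simp
  qed
  show "sumcheck 11 (nth [0::nat, 1, 2, 16, 5, 13, 6, 15, 4, 17, 3, 14, 7, 11, 8, 10, 9, 12]) [0,2,4,6] [0,1,2,3]" by code_simp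
qed simp

lemma case12: "\<exists>\<phi>. dispersed_placement (HH 12) 4 \<phi>"
proof (rule sumcrit[where g = "nth [0::nat, 1, 18, 2, 17, 4, 15, 5, 14, 6, 16, 3, 9, 11, 8, 12, 10, 13, 7]" and ss = "[0,2,4,6]" and K = "[0,1,2,3]"])
  show "bij_betw (nth [0::nat, 1, 18, 2, 17, 4, 15, 5, 14, 6, 16, 3, 9, 11, 8, 12, 10, 13, 7]) {0..<12+7} {0..<12+7}"
  proof -
    have t: "sort [0::nat, 1, 18, 2, 17, 4, 15, 5, 14, 6, 16, 3, 9, 11, 8, 12, 10, 13, 7] = [0..<19]" by code_simp
    show ?thesis using tbl_bij'[OF t] by simp
  qed
  show "sumcheck 12 (nth [0::nat, 1, 18, 2, 17, 4, 15, 5, 14, 6, 16, 3, 9, 11, 8, 12, 10, 13, 7]) [0,2,4,6] [0,1,2,3]" by code_simp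
qed simp

lemma case13: "\<exists>\<phi>. dispersed_placement (HH 13) 4 \<phi>"
proof (rule sumcrit[where g = "nth [0::nat, 1, 2, 18, 5, 15, 7, 16, 6, 17, 4, 19, 3, 11, 12, 8, 13, 10, 14, 9]" and ss = "[0,2,4,6]" and K = "[0,1,2,3]"])
  show "bij_betw (nth [0::nat, 1, 2, 18, 5, 15, 7, 16, 6, 17, 4, 19, 3, 11, 12, 8, 13, 10, 14, 9]) {0..<13+7} {0..<13+7}"
  proof -
    have t: "sort [0::nat, 1, 2, 18, 5, 15, 7, 16, 6, 17, 4, 19, 3, 11, 12, 8, 13, 10, 14, 9] = [0..<20]" by code_simp
    show ?thesis using tbl_bij'[OF t] by simp
  qed
  show "sumcheck 13 (nth [0::nat, 1, 2, 18, 5, 15, 7, 16, 6, 17, 4, 19, 3, 11, 12, 8, 13, 10, 14, 9]) [0,2,4,6] [0,1,2,3]" by code_simp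
qed simp

lemma case14: "\<exists>\<phi>. dispersed_placement (HH 14) 4 \<phi>"
proof (rule sumcrit[where g = "nth [0::nat, 1, 20, 2, 19, 4, 17, 5, 16, 7, 15, 6, 18, 3, 10, 12, 9, 13, 11, 14, 8]" and ss = "[0,2,4,6]" and K = "[0,1,2,3]"])
  show "bij_betw (nth [0::nat, 1, 20, 2, 19, 4, 17, 5, 16, 7, 15, 6, 18, 3, 10, 12, 9, 13, 11, 14, 8]) {0..<14+7} {0..<14+7}"
  proof -
    have t: "sort [0::nat, 1, 20, 2, 19, 4, 17, 5, 16, 7, 15, 6, 18, 3, 10, 12, 9, 13, 11, 14, 8] = [0..<21]" by code_simp
    show ?thesis using tbl_bij'[OF t] by simp
  qed
  show "sumcheck 14 (nth [0::nat, 1, 20, 2, 19, 4, 17, 5, 16, 7, 15, 6, 18, 3, 10, 12, 9, 13, 11, 14, 8]) [0,2,4,6] [0,1,2,3]" by code_simp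
qed simp

lemma case15: "\<exists>\<phi>. dispersed_placement (HH 15) 4 \<phi>"
proof (rule sumcrit[where g = "nth [0::nat, 1, 2, 20, 5, 17, 8, 15, 7, 18, 6, 19, 4, 21, 3, 16, 9, 13, 10, 12, 11, 14]" and ss = "[0,2,4,6]" and K = "[0,1,2,3]"])
  show "bij_betw (nth [0::nat, 1, 2, 20, 5, 17, 8, 15, 7, 18, 6, 19, 4, 21, 3, 16, 9, 13, 10, 12, 11, 14]) {0..<15+7} {0..<15+7}"
  proof -
    have t: "sort [0::nat, 1, 2, 20, 5, 17, 8, 15, 7, 18, 6, 19, 4, 21, 3, 16, 9, 13, 10, 12, 11, 14] = [0..<22]" by code_simp
    show ?thesis using tbl_bij'[OF t] by simp
  qed
  show "sumcheck 15 (nth [0::nat, 1, 2, 20, 5, 17, 8, 15, 7, 18, 6, 19, 4, 21, 3, 16, 9, 13, 10, 12, 11, 14]) [0,2,4,6] [0,1,2,3]" by code_simp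
qed simp

lemma case16: "\<exists>\<phi>. dispersed_placement (HH 16) 4 \<phi>"
proof (rule sumcrit[where g = "nth [0::nat, 1, 22, 2, 21, 4, 19, 5, 18, 7, 16, 8, 17, 6, 20, 3, 11, 13, 10, 14, 12, 15, 9]" and ss = "[0,2,4,6]" and K = "[0,1,2,3]"])
  show "bij_betw (nth [0::nat, 1, 22, 2, 21, 4, 19, 5, 18, 7, 16, 8, 17, 6, 20, 3, 11, 13, 10, 14, 12, 15, 9]) {0..<16+7} {0..<16+7}"
  proof -
    have t: "sort [0::nat, 1, 22, 2, 21, 4, 19, 5, 18, 7, 16, 8, 17, 6, 20, 3, 11, 13, 10, 14, 12, 15, 9] = [0..<23]" by code_simp
    show ?thesis using tbl_bij'[OF t] by simp
  qed
  show "sumcheck 16 (nth [0::nat, 1, 22, 2, 21, 4, 19, 5, 18, 7, 16, 8, 17, 6, 20, 3, 11, 13, 10, 14, 12, 15, 9]) [0,2,4,6] [0,1,2,3]" by code_simp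
qed simp

lemma case17: "\<exists>\<phi>. dispersed_placement (HH 17) 4 \<phi>"
proof (rule sumcrit[where g = "nth [0::nat, 1, 2, 22, 5, 19, 8, 16, 9, 18, 7, 20, 6, 21, 4, 23, 3, 17, 10, 14, 11, 13, 12, 15]" and ss = "[0,2,4,6]" and K = "[0,1,2,3]"])
  show "bij_betw (nth [0::nat, 1, 2, 22, 5, 19, 8, 16, 9, 18, 7, 20, 6, 21, 4, 23, 3, 17, 10, 14, 11, 13, 12, 15]) {0..<17+7} {0..<17+7}"
  proof -
    have t: "sort [0::nat, 1, 2, 22, 5, 19, 8, 16, 9, 18, 7, 20, 6, 21, 4, 23, 3, 17, 10, 14, 11, 13, 12, 15] = [0..<24]" by code_simp
    show ?thesis using tbl_bij'[OF t] by simp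
  qed
  show "sumcheck 17 (nth [0::nat, 1, 2, 22, 5, 19, 8, 16, 9, 18, 7, 20, 6, 21, 4, 23, 3, 17, 10, 14, 11, 13, 12, 15]) [0,2,4,6] [0,1,2,3]" by code_simp
qed simp

lemma case18: "\<exists>\<phi>. dispersed_placement (HH 18) 4 \<phi>"
proof (rule sumcrit[where g = "nth [0::nat, 1, 24, 2, 23, 4, 21, 5, 20, 7, 18, 8, 17, 9, 19, 6, 22, 3, 12, 14, 11, 15, 13, 16, 10]" and ss = "[0,2,4,6]" and K = "[0,1,2,3]"])
  show "bij_betw (nth [0::nat, 1, 24, 2, 23, 4, 21, 5, 20, 7, 18, 8, 17, 9, 19, 6, 22, 3, 12, 14, 11, 15, 13, 16, 10]) {0..<18+7} {0..<18+7}"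
  proof -
    have t: "sort [0::nat, 1, 24, 2, 23, 4, 21, 5, 20, 7, 18, 8, 17, 9, 19, 6, 22, 3, 12, 14, 11, 15, 13, 16, 10] = [0..<25]" by code_simp
    show ?thesis using tbl_bij'[OF t] by simp
  qed
  show "sumcheck 18 (nth [0::nat, 1, 24, 2, 23, 4, 21, 5, 20, 7, 18, 8, 17, 9, 19, 6, 22, 3, 12, 14, 11, 15, 13, 16, 10]) [0,2,4,6] [0,1,2,3]" by code_simp
qed simp

lemma case19: "\<exists>\<phi>. dispersed_placement (HH 19) 4 \<phi>"
proof (rule sumcrit[where g = "nth [0::nat, 1, 2, 24, 5, 21, 8, 18, 10, 19, 9, 20, 7, 22, 6, 23, 4, 25, 3, 14, 15, 11, 16, 13, 17, 12]" and ss = "[0,2,4,6]" and K = "[0,1,2,3]"])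
  show "bij_betw (nth [0::nat, 1, 2, 24, 5, 21, 8, 18, 10, 19, 9, 20, 7, 22, 6, 23, 4, 25, 3, 14, 15, 11, 16, 13, 17, 12]) {0..<19+7} {0..<19+7}"
  proof -
    have t: "sort [0::nat, 1, 2, 24, 5, 21, 8, 18, 10, 19, 9, 20, 7, 22, 6, 23, 4, 25, 3, 14, 15, 11, 16, 13, 17, 12] = [0..<26]" by code_simp
    show ?thesis using tbl_bij'[OF t] by simp
  qed
  show "sumcheck 19 (nth [0::nat, 1, 2, 24, 5, 21, 8, 18, 10, 19, 9, 20, 7, 22, 6, 23, 4, 25, 3, 14, 15, 11, 16, 13, 17, 12]) [0,2,4,6] [0,1,2,3]" by code_simp
qed simp

lemma case20: "\<exists>\<phi>. dispersed_placement (HH 20) 4 \<phi>"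
proof (rule sumcrit[where g = "nth [0::nat, 1, 26, 2, 25, 4, 23, 5, 22, 7, 20, 8, 19, 10, 18, 9, 21, 6, 24, 3, 13, 15, 12, 16, 14, 17, 11]" and ss = "[0,2,4,6]" and K = "[0,1,2,3]"])
  show "bij_betw (nth [0::nat, 1, 26, 2, 25, 4, 23, 5, 22, 7, 20, 8, 19, 10, 18, 9, 21, 6, 24, 3, 13, 15, 12, 16, 14, 17, 11]) {0..<20+7} {0..<20+7}"
  proof -
    have t: "sort [0::nat, 1, 26, 2, 25, 4, 23, 5, 22, 7, 20, 8, 19, 10, 18, 9, 21, 6, 24, 3, 13, 15, 12, 16, 14, 17, 11] = [0..<27]" by code_simp
    show ?thesis using tbl_bij'[OF t] by simp
  qed
  show "sumcheck 20 (nth [0::nat, 1, 26, 2, 25, 4, 23, 5, 22, 7, 20, 8, 19, 10, 18, 9, 21, 6, 24, 3, 13, 15, 12, 16, 14, 17, 11]) [0,2,4,6] [0,1,2,3]" by code_simp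
qed simp

lemma case21: "\<exists>\<phi>. dispersed_placement (HH 21) 4 \<phi>"
proof (rule sumcrit[where g = "nth [0::nat, 1, 2, 26, 5, 23, 8, 20, 11, 18, 10, 21, 9, 22, 7, 24, 6, 25, 4, 27, 3, 19, 12, 16, 13, 15, 14, 17]" and ss = "[0,2,4,6]" and K = "[0,1,2,3]"])
  show "bij_betw (nth [0::nat, 1, 2, 26, 5, 23, 8, 20, 11, 18, 10, 21, 9, 22, 7, 24, 6, 25, 4, 27, 3, 19, 12, 16, 13, 15, 14, 17]) {0..<21+7} {0..<21+7}"
  proof -
    have t: "sort [0::nat, 1, 2, 26, 5, 23, 8, 20, 11, 18, 10, 21, 9, 22, 7, 24, 6, 25, 4, 27, 3, 19, 12, 16, 13, 15, 14, 17] = [0..<28]" by code_simp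
    show ?thesis using tbl_bij'[OF t] by simp
  qed
  show "sumcheck 21 (nth [0::nat, 1, 2, 26, 5, 23, 8, 20, 11, 18, 10, 21, 9, 22, 7, 24, 6, 25, 4, 27, 3, 19, 12, 16, 13, 15, 14, 17]) [0,2,4,6] [0,1,2,3]" by code_simp
qed simp

lemma case22: "\<exists>\<phi>. dispersed_placement (HH 22) 4 \<phi>"
proof (rule sumcrit[where g = "nth [0::nat, 1, 28, 2, 27, 4, 25, 5, 24, 7, 22, 8, 21, 10, 19, 11, 20, 9, 23, 6, 26, 3, 14, 16, 13, 17, 15, 18, 12]" and ss = "[0,2,4,6]" and K = "[0,1,2,3]"])
  show "bij_betw (nth [0::nat, 1, 28, 2, 27, 4, 25, 5, 24, 7, 22, 8, 21, 10, 19, 11, 20, 9, 23, 6, 26, 3, 14, 16, 13, 17, 15, 18, 12]) {0..<22+7} {0..<22+7}"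
  proof -
    have t: "sort [0::nat, 1, 28, 2, 27, 4, 25, 5, 24, 7, 22, 8, 21, 10, 19, 11, 20, 9, 23, 6, 26, 3, 14, 16, 13, 17, 15, 18, 12] = [0..<29]" by code_simp
    show ?thesis using tbl_bij'[OF t] by simp
  qed
  show "sumcheck 22 (nth [0::nat, 1, 28, 2, 27, 4, 25, 5, 24, 7, 22, 8, 21, 10, 19, 11, 20, 9, 23, 6, 26, 3, 14, 16, 13, 17, 15, 18, 12]) [0,2,4,6] [0,1,2,3]" by code_simp
qed simp

lemma case23: "\<exists>\<phi>. dispersed_placement (HH 23) 4 \<phi>"
proof (rule sumcrit[where g = "nth [0::nat, 1, 2, 28, 5, 25, 8, 22, 11, 19, 12, 21, 10, 23, 9, 24, 7, 26, 6, 27, 4, 29, 3, 20, 13, 17, 14, 16, 15, 18]" and ss = "[0,2,4,6]" and K = "[0,1,2,3]"])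
  show "bij_betw (nth [0::nat, 1, 2, 28, 5, 25, 8, 22, 11, 19, 12, 21, 10, 23, 9, 24, 7, 26, 6, 27, 4, 29, 3, 20, 13, 17, 14, 16, 15, 18]) {0..<23+7} {0..<23+7}"
  proof -
    have t: "sort [0::nat, 1, 2, 28, 5, 25, 8, 22, 11, 19, 12, 21, 10, 23, 9, 24, 7, 26, 6, 27, 4, 29, 3, 20, 13, 17, 14, 16, 15, 18] = [0..<30]" by code_simp
    show ?thesis using tbl_bij'[OF t] by simp
  qed
  show "sumcheck 23 (nth [0::nat, 1, 2, 28, 5, 25, 8, 22, 11, 19, 12, 21, 10, 23, 9, 24, 7, 26, 6, 27, 4, 29, 3, 20, 13, 17, 14, 16, 15, 18]) [0,2,4,6] [0,1,2,3]" by code_simp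
qed simp

lemma case24: "\<exists>\<phi>. dispersed_placement (HH 24) 4 \<phi>"
proof (rule sumcrit[where g = "z (24+7)" and ss = "[0,2,4,11]" and K = "[0,1,12,2]"])
  show "bij_betw (z (24+7)) {0..<24+7} {0..<24+7}" by (rule z_bij)
  show "sumcheck 24 (z (24+7)) [0,2,4,11] [0,1,12,2]" by code_simp
qed simp

lemma case25: "\<exists>\<phi>. dispersed_placement (HH 25) 4 \<phi>"
proof (rule sumcrit[where g = "nth [0::nat, 1, 2, 30, 5, 27, 8, 24, 11, 21, 13, 22, 12, 23, 10, 25, 9, 26, 7, 28, 6, 29, 4, 31, 3, 17, 18, 14, 19, 16, 20, 15]" and ss = "[0,2,4,6]" and K = "[0,1,2,3]"])
  show "bij_betw (nth [0::nat, 1, 2, 30, 5, 27, 8, 24, 11, 21, 13, 22, 12, 23, 10, 25, 9, 26, 7, 28, 6, 29, 4, 31, 3, 17, 18, 14, 19, 16, 20, 15]) {0..<25+7} {0..<25+7}"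
  proof -
    have t: "sort [0::nat, 1, 2, 30, 5, 27, 8, 24, 11, 21, 13, 22, 12, 23, 10, 25, 9, 26, 7, 28, 6, 29, 4, 31, 3, 17, 18, 14, 19, 16, 20, 15] = [0..<32]" by code_simp
    show ?thesis using tbl_bij'[OF t] by simp
  qed
  show "sumcheck 25 (nth [0::nat, 1, 2, 30, 5, 27, 8, 24, 11, 21, 13, 22, 12, 23, 10, 25, 9, 26, 7, 28, 6, 29, 4, 31, 3, 17, 18, 14, 19, 16, 20, 15]) [0,2,4,6] [0,1,2,3]" by code_simp
qed simp

lemma case26: "\<exists>\<phi>. dispersed_placement (HH 26) 4 \<phi>"
proof (rule sumcrit[where g = "z (26+7)" and ss = "[0,2,4,7]" and K = "[0,1,13,2]"])
  show "bij_betw (z (26+7)) {0..<26+7} {0..<26+7}" by (rule z_bij)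
  show "sumcheck 26 (z (26+7)) [0,2,4,7] [0,1,13,2]" by code_simp
qed simp

lemma case27: "\<exists>\<phi>. dispersed_placement (HH 27) 4 \<phi>"
proof (rule sumcrit[where g = "z (27+7)" and ss = "[0,2,5,14]" and K = "[0,1,21,33]"])
  show "bij_betw (z (27+7)) {0..<27+7} {0..<27+7}" by (rule z_bij)
  show "sumcheck 27 (z (27+7)) [0,2,5,14] [0,1,21,33]" by code_simp
qed simp

lemma case28: "\<exists>\<phi>. dispersed_placement (HH 28) 4 \<phi>"
proof (rule sumcrit[where g = "z (28+7)" and ss = "[0,2,4,12]" and K = "[0,1,14,2]"])
  show "bij_betw (z (28+7)) {0..<28+7} {0..<28+7}" by (rule z_bij)
  show "sumcheck 28 (z (28+7)) [0,2,4,12] [0,1,14,2]" by code_simp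
qed simp

lemma case29: "\<exists>\<phi>. dispersed_placement (HH 29) 4 \<phi>"
proof (rule sumcrit[where g = "z (29+7)" and ss = "[0,2,4,6]" and K = "[0,1,22,35]"])
  show "bij_betw (z (29+7)) {0..<29+7} {0..<29+7}" by (rule z_bij)
  show "sumcheck 29 (z (29+7)) [0,2,4,6] [0,1,22,35]" by code_simp
qed simp

theorem lemma2p7:
  fixes l :: nat
  assumes "l \<ge> 9"
  shows "\<exists>\<phi>. dispersed_placement (disj_union (cycle_graph l) (Q_graph [2,2,2])) 4 \<phi>"
proof (cases "l \<ge> 30")
  case True then show ?thesis by (rule large)
next
  case False
  then have "l = 9 \<or> l = 10 \<or> l = 11 \<or> l = 12 \<or> l = 13 \<or> l = 14 \<or> l = 15 \<or> l = 16 \<or> l = 17 \<or> l = 18 \<or> l = 19 \<or> l = 20 \<or> l = 21 \<or> l = 22 \<or> l = 23 \<or> l = 24 \<or> l = 25 \<or> l = 26 \<or> l = 27 \<or> l = 28 \<or> l = 29" using assms by presburger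
  then show ?thesis
    using case9 case10 case11 case12 case13 case14 case15 case16 case17 case18 case19 case20 case21 case22 case23 case24 case25 case26 case27 case28 case29 by (elim disjE) simp_all
qed

end
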